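(* Let $m\ge2$, $n\ge1$, and let $\rho:BS(1,m)\to T_n(\mathbb Z[1/m])$ be an injective homomorphism such that $\Delta(\rho(a))\ne\mathbf 1_n$ and all diagonal entries of $\rho(t)$ are strictly positive. Then $\rho(BS(1,m))$ has CSP.
   Context: $BS(1,m)=\langle a,t\mid tat^{-1}=a^m\rangle$. $T_n(\mathbb Z[1/m])$ is the group of invertible upper triangular $n\times n$ matrices over $\mathbb Z[1/m]$, and $\Delta:T_n(\mathbb Z[1/m])\to D_n(\mathbb Z[1/m])$ is the homomorphism sending a matrix to the diagonal matrix with the same diagonal. For a subgroup $G\le GL_n(\mathbb Z[1/m])$ and an integer $N>0$ coprime to $m$, the congruence subgroup $G(N)$ is $G\cap\ker\big(GL_n(\mathbb Z[1/m])\to GL_n(\mathbb Z/N\mathbb Z)\big)$. $G$ has the congruence subgroup property (CSP) if every finite-index subgroup of $G$ contains $G(N)$ for some $N>0$ coprime to $m$. *)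

theory Defs
  imports "Jordan_Normal_Form.Matrix" "HOL-Algebra.Coset"
begin

definition Zinv :: "nat \<Rightarrow> rat set" where
  "Zinv m = {q. \<exists>(z::int) (k::nat). q = of_int z / (of_nat m) ^ k}"

definition mat_over :: "nat \<Rightarrow> nat \<Rightarrow> rat mat set" where
  "mat_over m n = {A \<in> carrier_mat n n. \<forall>i<n. \<forall>j<n. A $$ (i,j) \<in> Zinv m}"

definition GLZ :: "nat \<Rightarrow> nat \<Rightarrow> rat mat set" where
  "GLZ m n = {A \<in> mat_over m n. \<exists>B \<in> mat_over m n. A * B = 1\<^sub>m n \<and> B * A = 1\<^sub>m n}"

definition GLZ_group :: "nat \<Rightarrow> nat \<Rightarrow> rat mat monoid" where
  "GLZ_group m n = \<lparr>carrier = GLZ m n, mult = (\<lambda>A B. A * B), one = 1\<^sub>m n\<rparr>"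

definition TZ :: "nat \<Rightarrow> nat \<Rightarrow> rat mat set" where
  "TZ m n = {A \<in> GLZ m n. upper_triangular A}"

text \<open>Reduction modulo N (N coprime to m): the kernel of Z[1/m] -> Z/NZ is N Z[1/m].
  The congruence subgroup G(N) = G \<inter> ker(GL_n(Z[1/m]) -> GL_n(Z/NZ)).\<close>
definition cong_zero :: "nat \<Rightarrow> nat \<Rightarrow> rat \<Rightarrow> bool" where
  "cong_zero m N q \<longleftrightarrow> (\<exists>r \<in> Zinv m. q = of_nat N * r)"

definition cong_subgroup :: "nat \<Rightarrow> nat \<Rightarrow> rat mat set \<Rightarrow> nat \<Rightarrow> rat mat set" where
  "cong_subgroup m n G N =
     {A \<in> G. \<forall>i<n. \<forall>j<n. cong_zero m N (A $$ (i,j) - (1\<^sub>m n) $$ (i,j))}"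

definition has_CSP :: "nat \<Rightarrow> nat \<Rightarrow> rat mat set \<Rightarrow> bool" where
  "has_CSP m n G \<longleftrightarrow>
     (\<forall>K. subgroup K ((GLZ_group m n)\<lparr>carrier := G\<rparr>)
          \<and> finite (rcosets\<^bsub>(GLZ_group m n)\<lparr>carrier := G\<rparr>\<^esub> K)
        \<longrightarrow> (\<exists>N>0. coprime N m \<and> cong_subgroup m n G N \<subseteq> K))"

text \<open>The Baumslag--Solitar group BS(1,m), realised concretely as the group of affine maps
  x \<mapsto> m^k x + b of Q with k \<in> Z and b \<in> Z[1/m]; the pair (k,b) encodes this map and the
  product is composition. The generators are a = (0,1) (x \<mapsto> x+1) and t = (1,0) (x \<mapsto> m x),
  which satisfy t a t^-1 = a^m; this is the standard isomorphism
  <a,t | t a t^-1 = a^m> \<cong> Z[1/m] \<rtimes> Z.\<close>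
definition BS :: "nat \<Rightarrow> (int \<times> rat) monoid" where
  "BS m = \<lparr>carrier = {(k, b). b \<in> Zinv m},
           mult = (\<lambda>(k, b) (l, c). (k + l, (of_nat m) powi k * c + b)),
           one = (0, 0)\<rparr>"

definition BS_a :: "int \<times> rat" where "BS_a = (0, 1)"
definition BS_t :: "int \<times> rat" where "BS_t = (1, 0)"

end

theory Submission
  imports Defs
begin

lemma Zinv_I: "q = of_int z / of_nat m ^ k \<Longrightarrow> q \<in> Zinv m"
  unfolding Zinv_def by blast

lemma Zinv_E: assumes "q \<in> Zinv m" obtains z k where "q = of_int z / of_nat m ^ k"
  using assms unfolding Zinv_def by blast

lemma Zinv_int[simp]: "of_int z \<in> Zinv m"
  by (rule Zinv_I[where k=0 and z=z]) simp

lemma Zinv_0[simp]: "0 \<in> Zinv m" using Zinv_int[of 0 m] by simp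
lemma Zinv_1[simp]: "1 \<in> Zinv m" using Zinv_int[of 1 m] by simp

lemma Zinv_add: assumes "m > 0" "a \<in> Zinv m" "b \<in> Zinv m" shows "a + b \<in> Zinv m"
proof -
  obtain z1 k1 where a: "a = of_int z1 / of_nat m ^ k1" using assms(2) by (rule Zinv_E)
  obtain z2 k2 where b: "b = of_int z2 / of_nat m ^ k2" using assms(3) by (rule Zinv_E)
  have "a + b = of_int (z1 * int m ^ k2 + z2 * int m ^ k1) / of_nat m ^ (k1 + k2)"
    using assms(1) by (simp add: a b field_simps power_add)
  thus ?thesis by (rule Zinv_I)
qed

lemma Zinv_mult: assumes "a \<in> Zinv m" "b \<in> Zinv m" shows "a * b \<in> Zinv m"
proof -
  obtain z1 k1 where a: "a = of_int z1 / of_nat m ^ k1" using assms(1) by (rule Zinv_E)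
  obtain z2 k2 where b: "b = of_int z2 / of_nat m ^ k2" using assms(2) by (rule Zinv_E)
  have "a * b = of_int (z1 * z2) / of_nat m ^ (k1 + k2)"
    by (simp add: a b power_add)
  thus ?thesis by (rule Zinv_I)
qed

lemma Zinv_uminus: assumes "a \<in> Zinv m" shows "- a \<in> Zinv m"
proof -
  obtain z1 k1 where a: "a = of_int z1 / of_nat m ^ k1" using assms(1) by (rule Zinv_E)
  have "- a = of_int (- z1) / of_nat m ^ k1" by (simp add: a)
  thus ?thesis by (rule Zinv_I)
qed

lemma Zinv_diff: assumes "m > 0" "a \<in> Zinv m" "b \<in> Zinv m" shows "a - b \<in> Zinv m"
  using Zinv_add[OF assms(1,2) Zinv_uminus[OF assms(3)]] by simp

lemma Zinv_div_pow: assumes "a \<in> Zinv m" shows "a / of_nat m ^ j \<in> Zinv m"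
proof -
  obtain z1 k1 where a: "a = of_int z1 / of_nat m ^ k1" using assms(1) by (rule Zinv_E)
  have "a / of_nat m ^ j = of_int z1 / of_nat m ^ (k1 + j)" by (simp add: a power_add)
  thus ?thesis by (rule Zinv_I)
qed

lemma Zinv_pow: "(of_nat m :: rat) ^ j \<in> Zinv m"
  using Zinv_int[of "int m ^ j" m] by simp

lemma Zinv_powi: assumes "a \<in> Zinv m" shows "(of_nat m) powi k * a \<in> Zinv m"
proof (cases "k \<ge> 0")
  case True
  then show ?thesis using Zinv_mult[OF Zinv_pow assms] by (simp add: power_int_def)
next
  case False
  then have "(of_nat m) powi k * a = a / of_nat m ^ nat (-k)"
    by (simp add: power_int_def power_inverse divide_inverse mult.commute)
  then show ?thesis using Zinv_div_pow[OF assms] by simp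
qed

lemma Zinv_sum: assumes "m > 0" "\<And>i. i \<in> A \<Longrightarrow> f i \<in> Zinv m" shows "sum f A \<in> Zinv m"
  using assms(2)
proof (induction A rule: infinite_finite_induct)
  case (insert x F) then show ?case using Zinv_add[OF assms(1)] by simp
qed simp_all

lemma CZ_I: "r \<in> Zinv m \<Longrightarrow> q = of_nat N * r \<Longrightarrow> cong_zero m N q"
  unfolding cong_zero_def by blast

lemma CZ_0[simp]: "cong_zero m N 0" by (rule CZ_I[of 0]) simp_all

lemma CZ_add: assumes "m > 0" "cong_zero m N a" "cong_zero m N b" shows "cong_zero m N (a + b)"
proof -
  obtain r1 r2 where "r1 \<in> Zinv m" "r2 \<in> Zinv m" "a = of_nat N * r1" "b = of_nat N * r2"
    using assms unfolding cong_zero_def by blast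
  then show ?thesis by (intro CZ_I[of "r1 + r2"]) (auto simp: Zinv_add assms(1) algebra_simps)
qed

lemma CZ_uminus: assumes "cong_zero m N a" shows "cong_zero m N (- a)"
proof -
  obtain r1 where "r1 \<in> Zinv m" "a = of_nat N * r1"
    using assms unfolding cong_zero_def by blast
  then show ?thesis by (intro CZ_I[of "- r1"]) (auto simp: Zinv_uminus)
qed

lemma CZ_mult: assumes "cong_zero m N a" "b \<in> Zinv m" shows "cong_zero m N (a * b)" "cong_zero m N (b * a)"
proof -
  obtain r1 where "r1 \<in> Zinv m" "a = of_nat N * r1"
    using assms unfolding cong_zero_def by blast
  then show "cong_zero m N (a * b)" "cong_zero m N (b * a)"
    by (auto intro!: CZ_I[of "r1 * b"] simp: Zinv_mult assms)
qed

lemma CZ_sum: assumes "m > 0" "\<And>i. i \<in> A \<Longrightarrow> cong_zero m N (f i)" shows "cong_zero m N (sum f A)"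
  using assms(2)
proof (induction A rule: infinite_finite_induct)
  case (insert x F) then show ?case using CZ_add[OF assms(1)] by simp
qed simp_all


lemma decomp_coprime: fixes m :: nat assumes "m > 0"
  shows "x > 0 \<Longrightarrow> \<exists>y e. y > 0 \<and> coprime y m \<and> x dvd y * m ^ e"
proof (induction x rule: less_induct)
  case (less x)
  show ?case
  proof (cases "coprime x m")
    case True then show ?thesis using less.prems by (intro exI[of _ x] exI[of _ 0]) auto
  next
    case False
    define p where "p = gcd x m"
    have p: "p \<noteq> 1" "p dvd x" "p dvd m" using False by (auto simp: p_def coprime_iff_gcd_eq_1)
    then obtain x' where x': "x = p * x'" by blast
    have "p > 1" using p(1) x' less.prems by (cases p) auto
    then have "x' > 0" "x' < x" using x' less.prems by auto
    then obtain y e where ye: "y > 0" "coprime y m" "x' dvd y * m ^ e" using less.IH by blast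
    have "p * x' dvd m * (y * m ^ e)" using ye(3) p(3) by (rule mult_dvd_mono[rotated])
    then have "x dvd y * m ^ (Suc e)" using x' by (simp add: ac_simps)
    then show ?thesis using ye by blast
  qed
qed

lemma Zinv_int_dvd: fixes m N :: nat assumes "m > 0" "N > 0" "coprime N m" "r \<in> Zinv m"
    "(of_int x :: rat) = of_nat N * r"
  shows "int N dvd x"
proof -
  obtain z k where r: "r = of_int z / of_nat m ^ k" using assms(4) by (rule Zinv_E)
  have "(of_int (x * int m ^ k) :: rat) = of_int (int N * z)"
    using assms(1,5) by (simp add: r field_simps)
  then have "x * int m ^ k = int N * z" by (simp only: of_int_eq_iff)
  then have "int N dvd x * int m ^ k" by simp
  moreover have "coprime (int N) (int m ^ k)" using assms(3) by simp
  ultimately show ?thesis using coprime_dvd_mult_left_iff by blast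
qed

lemma dvd_pow_minus_one: fixes x :: int shows "x - 1 dvd x ^ q - 1"
proof (induction q)
  case (Suc q)
  have "x ^ Suc q - 1 = x * (x ^ q - 1) + (x - 1)" by (simp add: algebra_simps)
  then show ?case using Suc by (metis dvd_add dvd_mult dvd_refl)
qed simp

lemma pow_minus_one_dvd: fixes m :: nat assumes "m \<ge> 2" "F \<ge> 1" "int m ^ F - 1 dvd int m ^ k - 1"
  shows "F dvd k"
proof -
  define q r where "q = k div F" "r = k mod F"
  have k: "k = F * q + r" and rF: "r < F" using assms(2) by (auto simp: q_r_def)
  have "int m ^ k - 1 = int m ^ r * ((int m ^ F) ^ q - 1) + (int m ^ r - 1)"
    by (simp add: k power_add power_mult algebra_simps)
  moreover have "int m ^ F - 1 dvd int m ^ r * ((int m ^ F) ^ q - 1)"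
    using dvd_pow_minus_one by (simp add: dvd_mult)
  ultimately have d: "int m ^ F - 1 dvd int m ^ r - 1" using assms(3)
    by (metis dvd_add_right_iff)
  have "int m ^ r < int m ^ F" using rF assms(1) by (simp add: power_strict_increasing)
  moreover have "int m ^ r \<ge> 1" using assms(1) by simp
  ultimately have "int m ^ r - 1 = 0"
    using d by (metis diff_ge_0_iff_ge diff_strict_right_mono zdvd_not_zless le_less)
  then have "m ^ r = 1" by (metis eq_iff_diff_eq_0 of_nat_eq_1_iff of_nat_power)
  then have "r = 0" using assms(1) by (metis one_less_power less_le_trans one_less_numeral_iff semiring_norm(76) gr0I less_irrefl)
  then show ?thesis using k by simp
qed

lemma coprime_pow_minus_one: fixes m :: nat assumes "m \<ge> 1" "F \<ge> 1"
  shows "coprime (m ^ F - 1) m"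
proof -
  have "coprime (m ^ F - 1) (m ^ F)"
  proof -
    have "m ^ F = (m ^ F - 1) + 1" using assms by simp
    then show ?thesis by (metis coprime_Suc_right_nat Suc_eq_plus1)
  qed
  then show ?thesis using assms(2) by (metis coprime_power_right_iff not_one_le_zero)
qed


lemma mult_entry: assumes "A \<in> carrier_mat n n" "B \<in> carrier_mat n n" "i < n" "j < n"
  shows "(A * B) $$ (i,j) = (\<Sum>k<n. A $$ (i,k) * B $$ (k,j))"
  using assms by (simp add: scalar_prod_def atLeast0LessThan)

definition Ud :: "nat \<Rightarrow> nat \<Rightarrow> rat mat \<Rightarrow> bool" where
  "Ud n d X \<longleftrightarrow> X \<in> carrier_mat n n \<and>
     (\<forall>i<n. \<forall>j<n. j < i + d \<longrightarrow> X $$ (i,j) = (if i = j then 1 else 0))"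

lemma Ud_mult: assumes "Ud n d X" "Ud n d Y" "d \<ge> 1"
  shows "Ud n d (X * Y)" "\<And>i. i + d < n \<Longrightarrow> (X * Y) $$ (i,i+d) = X $$ (i,i+d) + Y $$ (i,i+d)"
proof -
  have X: "X \<in> carrier_mat n n" and Y: "Y \<in> carrier_mat n n" using assms unfolding Ud_def by auto
  have Xe: "\<And>i j. i<n \<Longrightarrow> j<n \<Longrightarrow> j < i + d \<Longrightarrow> X $$ (i,j) = (if i = j then 1 else 0)"
    and Ye: "\<And>i j. i<n \<Longrightarrow> j<n \<Longrightarrow> j < i + d \<Longrightarrow> Y $$ (i,j) = (if i = j then 1 else 0)"
    using assms unfolding Ud_def by auto
  have low: "(X * Y) $$ (i,j) = (if i = j then 1 else 0)" if ij: "i < n" "j < n" "j < i + d" for i j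
  proof -
    have "(X * Y) $$ (i,j) = (\<Sum>k<n. X $$ (i,k) * Y $$ (k,j))" by (rule mult_entry[OF X Y ij(1,2)])
    also have "\<dots> = X $$ (i,i) * Y $$ (i,j) + (\<Sum>k\<in>{..<n} - {i}. X $$ (i,k) * Y $$ (k,j))"
      using ij by (subst sum.remove[of _ i]) auto
    also have "(\<Sum>k\<in>{..<n} - {i}. X $$ (i,k) * Y $$ (k,j)) = 0"
    proof (rule sum.neutral, rule ballI)
      fix k assume "k \<in> {..<n} - {i}"
      then have k: "k < n" "k \<noteq> i" by auto
      show "X $$ (i,k) * Y $$ (k,j) = 0"
      proof (cases "k < i + d")
        case True then show ?thesis using Xe[OF ij(1) k(1)] k by simp
      next
        case False then show ?thesis using Ye[OF k(1) ij(2)] ij by simp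
      qed
    qed
    finally show ?thesis using Xe[OF ij(1) ij(1)] Ye[OF ij(1) ij(2)] ij assms(3) by simp
  qed
  show "Ud n d (X * Y)" unfolding Ud_def using low X Y by auto
  fix i assume i: "i + d < n"
  have "(X * Y) $$ (i,i+d) = (\<Sum>k<n. X $$ (i,k) * Y $$ (k,i+d))" by (rule mult_entry[OF X Y]) (use i in auto)
  also have "\<dots> = (\<Sum>k\<in>{i, i+d}. X $$ (i,k) * Y $$ (k,i+d))"
  proof (rule sum.mono_neutral_right)
    show "finite {..<n}" by simp
    show "{i, i+d} \<subseteq> {..<n}" using i by auto
    show "\<forall>k\<in>{..<n} - {i, i + d}. X $$ (i,k) * Y $$ (k,i+d) = 0"
    proof
    fix k assume "k \<in> {..<n} - {i, i + d}"
    then have k: "k < n" "k \<noteq> i" "k \<noteq> i + d" by auto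
    show "X $$ (i,k) * Y $$ (k,i+d) = 0"
    proof (cases "k < i + d")
      case True then show ?thesis using Xe[of i k] k i by simp
    next
      case False then show ?thesis using Ye[of k "i+d"] k i by simp
    qed
    qed
  qed
  also have "\<dots> = X $$ (i,i) * Y $$ (i,i+d) + X $$ (i,i+d) * Y $$ (i+d,i+d)"
    using assms(3) by simp
  also have "\<dots> = X $$ (i,i+d) + Y $$ (i,i+d)"
    using Xe[of i i] Ye[of "i+d" "i+d"] i assms(3) by simp
  finally show "(X * Y) $$ (i,i+d) = X $$ (i,i+d) + Y $$ (i,i+d)" .
qed

lemma mat_overD: "A \<in> mat_over m n \<Longrightarrow> A \<in> carrier_mat n n"
  "A \<in> mat_over m n \<Longrightarrow> i < n \<Longrightarrow> j < n \<Longrightarrow> A $$ (i,j) \<in> Zinv m"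
  unfolding mat_over_def by auto

definition EN :: "nat \<Rightarrow> nat \<Rightarrow> nat \<Rightarrow> rat mat \<Rightarrow> bool" where
  "EN m n N A \<longleftrightarrow> A \<in> carrier_mat n n \<and> (\<forall>i<n. \<forall>j<n. cong_zero m N (A $$ (i,j)))"

lemma EN_mult: assumes "m > 0" "EN m n N A" "B \<in> mat_over m n"
  shows "EN m n N (A * B)" "EN m n N (B * A)"
proof -
  have A: "A \<in> carrier_mat n n" and B: "B \<in> carrier_mat n n" using assms mat_overD unfolding EN_def by auto
  have Ae: "\<And>i j. i < n \<Longrightarrow> j < n \<Longrightarrow> cong_zero m N (A $$ (i,j))" using assms unfolding EN_def by auto
  have Be: "\<And>i j. i < n \<Longrightarrow> j < n \<Longrightarrow> B $$ (i,j) \<in> Zinv m" using assms mat_overD by auto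
  have "cong_zero m N ((A * B) $$ (i,j))" if "i < n" "j < n" for i j
    unfolding mult_entry[OF A B that] using that by (intro CZ_sum assms(1) CZ_mult Ae Be) auto
  then show "EN m n N (A * B)" unfolding EN_def using A B by auto
  have "cong_zero m N ((B * A) $$ (i,j))" if "i < n" "j < n" for i j
    unfolding mult_entry[OF B A that] using that by (intro CZ_sum assms(1) CZ_mult Ae Be) auto
  then show "EN m n N (B * A)" unfolding EN_def using A B by auto
qed

definition Cg :: "nat \<Rightarrow> nat \<Rightarrow> nat \<Rightarrow> rat mat \<Rightarrow> bool" where
  "Cg m n N X \<longleftrightarrow> X \<in> carrier_mat n n \<and> (\<forall>i<n. \<forall>j<n. cong_zero m N (X $$ (i,j) - (1\<^sub>m n) $$ (i,j)))"

lemma Cg_EN: "Cg m n N X \<longleftrightarrow> X \<in> carrier_mat n n \<and> EN m n N (X - 1\<^sub>m n)"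
  unfolding Cg_def EN_def by auto

lemma Cg_mult: assumes "m > 0" "Cg m n N X" "Cg m n N Y" "Y \<in> mat_over m n"
  shows "Cg m n N (X * Y)"
proof -
  have X: "X \<in> carrier_mat n n" and Y: "Y \<in> carrier_mat n n" using assms unfolding Cg_def by auto
  have E: "EN m n N ((X - 1\<^sub>m n) * Y)" using EN_mult(1)[OF assms(1) _ assms(4)] assms(2) Cg_EN by blast
  have eq: "(X - 1\<^sub>m n) * Y = X * Y - Y" using X Y by (simp add: minus_mult_distrib_mat[OF X _ Y])
  show ?thesis unfolding Cg_def
  proof (intro conjI allI impI)
    show "X * Y \<in> carrier_mat n n" using X Y by simp
    fix i j assume ij: "i < n" "j < n"
    have "cong_zero m N (((X - 1\<^sub>m n) * Y) $$ (i,j) + (Y $$ (i,j) - 1\<^sub>m n $$ (i,j)))"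
      using E assms(3) ij unfolding EN_def Cg_def by (intro CZ_add assms(1)) auto
    also have "((X - 1\<^sub>m n) * Y) $$ (i,j) = (X * Y) $$ (i,j) - Y $$ (i,j)"
      unfolding eq using ij X Y by simp
    finally show "cong_zero m N ((X * Y) $$ (i, j) - 1\<^sub>m n $$ (i, j))" by simp
  qed
qed

lemma Cg_inv: assumes "m > 0" "Cg m n N X" "Y \<in> mat_over m n" "Y * X = 1\<^sub>m n"
  shows "Cg m n N Y"
proof -
  have X: "X \<in> carrier_mat n n" and Y: "Y \<in> carrier_mat n n" using assms mat_overD unfolding Cg_def by auto
  have E: "EN m n N (Y * (X - 1\<^sub>m n))" using EN_mult(2)[OF assms(1) _ assms(3)] assms(2) Cg_EN by blast
  have eq: "Y * (X - 1\<^sub>m n) = 1\<^sub>m n - Y" using X Y assms(4) by (simp add: mult_minus_distrib_mat[OF Y X])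
  show ?thesis unfolding Cg_def
  proof (intro conjI allI impI)
    show "Y \<in> carrier_mat n n" by (rule Y)
    fix i j assume ij: "i < n" "j < n"
    have "cong_zero m N (- ((Y * (X - 1\<^sub>m n)) $$ (i,j)))"
      using E ij unfolding EN_def by (intro CZ_uminus) auto
    also have "- ((Y * (X - 1\<^sub>m n)) $$ (i,j)) = Y $$ (i,j) - 1\<^sub>m n $$ (i,j)"
      unfolding eq using ij Y by simp
    finally show "cong_zero m N (Y $$ (i, j) - 1\<^sub>m n $$ (i, j))" .
  qed
qed

lemma Cg_conj: assumes "m > 0" "Cg m n N X" "P \<in> mat_over m n" "Q \<in> mat_over m n" "P * Q = 1\<^sub>m n"
  shows "Cg m n N (P * (X * Q))"
proof -
  have X: "X \<in> carrier_mat n n" and P: "P \<in> carrier_mat n n" and Q: "Q \<in> carrier_mat n n"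
    using assms mat_overD unfolding Cg_def by auto
  have E: "EN m n N (P * ((X - 1\<^sub>m n) * Q))"
    using EN_mult(2)[OF assms(1) EN_mult(1)[OF assms(1) _ assms(4)] assms(3)] assms(2) Cg_EN by blast
  have eq: "P * ((X - 1\<^sub>m n) * Q) = P * (X * Q) - 1\<^sub>m n"
    using X P Q assms(5) by (simp add: minus_mult_distrib_mat[OF X _ Q] mult_minus_distrib_mat[OF P _ Q])
  show ?thesis unfolding Cg_def
  proof (intro conjI allI impI)
    show "P * (X * Q) \<in> carrier_mat n n" using X P Q by simp
    fix i j assume ij: "i < n" "j < n"
    have "cong_zero m N ((P * ((X - 1\<^sub>m n) * Q)) $$ (i,j))"
      using E ij unfolding EN_def by auto
    also have "(P * ((X - 1\<^sub>m n) * Q)) $$ (i,j) = (P * (X * Q)) $$ (i,j) - 1\<^sub>m n $$ (i,j)"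
      unfolding eq using ij X P Q by simp
    finally show "cong_zero m N ((P * (X * Q)) $$ (i, j) - 1\<^sub>m n $$ (i, j))" .
  qed
qed


lemma additive_Zinv:
  assumes m: "m > 0" and add: "\<And>a b. a \<in> Zinv m \<Longrightarrow> b \<in> Zinv m \<Longrightarrow> \<phi> (a + b) = \<phi> a + (\<phi> b :: rat)"
    and c: "c \<in> Zinv m"
  shows "\<phi> c = c * \<phi> 1"
proof -
  have z: "\<phi> 0 = 0" using add[of 0 0] by simp
  have nat: "\<phi> (of_nat N * x) = of_nat N * \<phi> x" if x: "x \<in> Zinv m" for N x
  proof (induction N)
    case (Suc N)
    have "of_nat N * x \<in> Zinv m" using Zinv_mult[OF Zinv_int[of "int N"] x] by simp
    then have "\<phi> (of_nat N * x + x) = \<phi> (of_nat N * x) + \<phi> x" using add x by blast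
    then show ?case using Suc by (simp add: algebra_simps)
  qed (simp add: z)
  have neg: "\<phi> (- x) = - \<phi> x" if x: "x \<in> Zinv m" for x
    using add[OF x Zinv_uminus[OF x]] z by simp
  have int: "\<phi> (of_int z * x) = of_int z * \<phi> x" if x: "x \<in> Zinv m" for z x
  proof (cases "z \<ge> 0")
    case True then show ?thesis using nat[OF x, of "nat z"] by simp
  next
    case False
    have "of_int (int (nat (-z))) * x \<in> Zinv m" by (rule Zinv_mult[OF Zinv_int x])
    then have "of_nat (nat (-z)) * x \<in> Zinv m" by (metis of_int_of_nat_eq)
    then have "\<phi> (- (of_nat (nat (-z)) * x)) = - (of_nat (nat (-z)) * \<phi> x)" using neg nat[OF x] by simp
    then show ?thesis using False by simp
  qed
  obtain z k where ck: "c = of_int z / of_nat m ^ k" using c by (rule Zinv_E)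
  define x where "x = 1 / (of_nat m ^ k :: rat)"
  have x: "x \<in> Zinv m" unfolding x_def using Zinv_div_pow[OF Zinv_1] by simp
  have "\<phi> 1 = \<phi> (of_int (int m ^ k) * x)" using m by (simp add: x_def)
  also have "\<dots> = of_nat m ^ k * \<phi> x" using int[OF x, of "int m ^ k"] by simp
  finally have 1: "\<phi> 1 = of_nat m ^ k * \<phi> x" .
  have "\<phi> c = \<phi> (of_int z * x)" by (simp add: ck x_def)
  also have "\<dots> = of_int z * \<phi> x" using int[OF x] by simp
  also have "\<dots> = c * \<phi> 1" using m by (simp add: 1 ck)
  finally show ?thesis .
qed

lemma nat_step_exists: assumes "P 1" "\<not> P N" "N \<ge> 1"
  shows "\<exists>d. 1 \<le> d \<and> d < N \<and> P d \<and> \<not> P (Suc d)"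
proof (rule ccontr)
  assume "\<not> ?thesis"
  then have step: "\<And>d. 1 \<le> d \<Longrightarrow> d < N \<Longrightarrow> P d \<Longrightarrow> P (Suc d)" by blast
  have "1 \<le> k \<Longrightarrow> k \<le> N \<Longrightarrow> P k" for k
  proof (induction k)
    case (Suc k)
    then show ?case using step assms(1) by (cases "k = 0") auto
  qed simp
  then show False using assms by simp
qed

lemma diag_mult: assumes "A \<in> carrier_mat n n" "B \<in> carrier_mat n n" "upper_triangular A" "upper_triangular B" "i < n"
  shows "(A * B) $$ (i,i) = A $$ (i,i) * B $$ (i,i)"
proof -
  have "(A * B) $$ (i,i) = (\<Sum>k<n. A $$ (i,k) * B $$ (k,i))" by (rule mult_entry) (use assms in auto)
  also have "\<dots> = A $$ (i,i) * B $$ (i,i) + (\<Sum>k\<in>{..<n} - {i}. A $$ (i,k) * B $$ (k,i))"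
    using assms by (subst sum.remove[of _ i]) auto
  also have "(\<Sum>k\<in>{..<n} - {i}. A $$ (i,k) * B $$ (k,i)) = 0"
  proof (rule sum.neutral, rule ballI)
    fix k assume "k \<in> {..<n} - {i}"
    then have k: "k < n" "k \<noteq> i" by auto
    show "A $$ (i,k) * B $$ (k,i) = 0"
    proof (cases "k < i")
      case True then show ?thesis using assms(1,3,5) unfolding upper_triangular_def by auto
    next
      case False then show ?thesis using assms(2,4) k unfolding upper_triangular_def by auto
    qed
  qed
  finally show ?thesis by simp
qed

lemma BS_carrier[simp]: "(k, b) \<in> carrier (BS m) \<longleftrightarrow> b \<in> Zinv m"
  by (simp add: BS_def)

lemma BS_mult[simp]: "(k, b) \<otimes>\<^bsub>BS m\<^esub> (l, c) = (k + l, (of_nat m) powi k * c + b)"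
  by (simp add: BS_def)


definition W :: "(int \<times> rat \<Rightarrow> rat mat) \<Rightarrow> rat \<Rightarrow> rat mat" where "W \<rho> c = \<rho> (0, 2 * c)"

context
  fixes m n :: nat and \<rho> :: "int \<times> rat \<Rightarrow> rat mat"
  assumes m2: "m \<ge> 2" and hom: "\<rho> \<in> hom (BS m) (GLZ_group m n)"
    and TZ: "\<rho> ` carrier (BS m) \<subseteq> TZ m n"
    and inj: "inj_on \<rho> (carrier (BS m))"
begin

lemma m0: "m > 0" using m2 by simp

lemma rho_mult: "b \<in> Zinv m \<Longrightarrow> c \<in> Zinv m \<Longrightarrow>
   \<rho> (k + l, (of_nat m) powi k * c + b) = \<rho> (k, b) * \<rho> (l, c)"
  using hom_mult[OF hom, of "(k,b)" "(l,c)"] by (simp add: GLZ_group_def)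

lemma rho_TZ: "b \<in> Zinv m \<Longrightarrow> \<rho> (k, b) \<in> TZ m n"
  using TZ by auto

lemma rho_over: "b \<in> Zinv m \<Longrightarrow> \<rho> (k, b) \<in> mat_over m n"
  using rho_TZ unfolding TZ_def GLZ_def by auto

lemma rho_carrier: "b \<in> Zinv m \<Longrightarrow> \<rho> (k, b) \<in> carrier_mat n n"
  using rho_over mat_overD by blast

lemma rho_ut: "b \<in> Zinv m \<Longrightarrow> upper_triangular (\<rho> (k, b))"
  using rho_TZ unfolding TZ_def by auto

lemma rho_one: "\<rho> (0, 0) = 1\<^sub>m n"
proof -
  have "\<rho> (0,0) \<in> GLZ m n" using rho_TZ[of 0 0] unfolding TZ_def by auto
  then obtain B where B: "B \<in> mat_over m n" "B * \<rho> (0,0) = 1\<^sub>m n" unfolding GLZ_def by auto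
  have idem: "\<rho> (0,0) = \<rho> (0,0) * \<rho> (0,0)" using rho_mult[of 0 0 0 0] by simp
  have C: "\<rho> (0,0) \<in> carrier_mat n n" "B \<in> carrier_mat n n" using rho_carrier[of 0 0] B mat_overD by auto
  have "\<rho> (0,0) = (B * \<rho> (0,0)) * \<rho> (0,0)" using B C by simp
  also have "\<dots> = B * (\<rho> (0,0) * \<rho> (0,0))" using C by simp
  also have "\<dots> = 1\<^sub>m n" using idem B by simp
  finally show ?thesis .
qed

definition binv :: "int \<Rightarrow> rat \<Rightarrow> rat" where "binv k b = - ((of_nat m) powi (-k) * b)"

lemma binv_Zinv: "b \<in> Zinv m \<Longrightarrow> binv k b \<in> Zinv m"
  unfolding binv_def by (intro Zinv_uminus Zinv_powi)

lemma rho_inv: assumes "b \<in> Zinv m"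
  shows "\<rho> (k, b) * \<rho> (-k, binv k b) = 1\<^sub>m n" "\<rho> (-k, binv k b) * \<rho> (k, b) = 1\<^sub>m n"
proof -
  have "\<rho> (k, b) * \<rho> (-k, binv k b) = \<rho> (k + -k, (of_nat m) powi k * binv k b + b)"
    using rho_mult[OF assms binv_Zinv[OF assms], of k "-k"] by simp
  also have "(of_nat m :: rat) powi k * binv k b + b = 0"
    using m0 by (simp add: binv_def power_int_minus field_simps)
  finally show "\<rho> (k, b) * \<rho> (-k, binv k b) = 1\<^sub>m n" using rho_one by simp
  have "\<rho> (-k, binv k b) * \<rho> (k, b) = \<rho> (-k + k, (of_nat m) powi (-k) * b + binv k b)"
    using rho_mult[OF binv_Zinv[OF assms] assms, of "-k" k] by simp
  also have "(of_nat m :: rat) powi (-k) * b + binv k b = 0"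
    by (simp add: binv_def)
  finally show "\<rho> (-k, binv k b) * \<rho> (k, b) = 1\<^sub>m n" using rho_one by simp
qed


lemma Zinv_2: "a \<in> Zinv m \<Longrightarrow> 2 * a \<in> Zinv m"
  using Zinv_mult[OF Zinv_int[of 2]] by simp

lemma Zinv_natmult: "a \<in> Zinv m \<Longrightarrow> of_nat N * a \<in> Zinv m"
  using Zinv_mult[OF Zinv_int[of "int N"]] by simp

lemma rho_add0: "x \<in> Zinv m \<Longrightarrow> y \<in> Zinv m \<Longrightarrow> \<rho> (0, x) * \<rho> (0, y) = \<rho> (0, x + y)"
  using rho_mult[of x y 0 0] by (simp add: add.commute)

lemma diag_rho: "x \<in> Zinv m \<Longrightarrow> y \<in> Zinv m \<Longrightarrow> i < n \<Longrightarrow>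
   (\<rho> (k, x) * \<rho> (l, y)) $$ (i,i) = \<rho> (k, x) $$ (i,i) * \<rho> (l, y) $$ (i,i)"
  by (rule diag_mult[OF rho_carrier rho_carrier rho_ut rho_ut])

lemma diag_add: assumes "x \<in> Zinv m" "y \<in> Zinv m" "i < n"
  shows "\<rho> (0, x + y) $$ (i,i) = \<rho> (0, x) $$ (i,i) * \<rho> (0, y) $$ (i,i)"
  using diag_rho[OF assms(1,2,3), of 0 0] rho_add0[OF assms(1,2)] by simp

lemma diag_nz: assumes "x \<in> Zinv m" "i < n" shows "\<rho> (0, x) $$ (i,i) \<noteq> 0"
proof -
  have "\<rho> (0, x) $$ (i,i) * \<rho> (0, -x) $$ (i,i) = 1"
    using diag_add[OF assms(1) Zinv_uminus[OF assms(1)] assms(2)] rho_one assms(2) by simp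
  then show ?thesis by auto
qed

lemma diag_m: assumes "x \<in> Zinv m" "i < n" shows "\<rho> (0, of_nat m * x) $$ (i,i) = \<rho> (0, x) $$ (i,i)"
proof -
  have mx: "of_nat m * x \<in> Zinv m" using Zinv_natmult[OF assms(1)] .
  have e1: "\<rho> (1, 0) * \<rho> (0, x) = \<rho> (1, of_nat m * x)"
    using rho_mult[of 0 x 1 0] assms by simp
  have e2: "\<rho> (0, of_nat m * x) * \<rho> (1, 0) = \<rho> (1, of_nat m * x)"
    using rho_mult[of "of_nat m * x" 0 0 1] mx by simp
  have l: "\<rho> (1, 0) $$ (i,i) * \<rho> (-1, 0) $$ (i,i) = 1"
    using rho_inv(1)[of 0 1] diag_rho[OF Zinv_0 Zinv_0 assms(2), of 1 "-1"] assms(2)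
    by (simp add: binv_def)
  have "\<rho> (1, 0) $$ (i,i) * \<rho> (0, x) $$ (i,i) = \<rho> (0, of_nat m * x) $$ (i,i) * \<rho> (1, 0) $$ (i,i)"
    using diag_rho[OF Zinv_0 assms(1) assms(2), of 1 0] 
      diag_rho[OF mx Zinv_0 assms(2), of 0 1] e1 e2 assms mx
    by simp
  then show ?thesis using l by (metis mult.commute mult_cancel_left mult_zero_left zero_neq_one)
qed

lemma diag_pow: assumes "x \<in> Zinv m" "i < n" shows "\<rho> (0, of_nat N * x) $$ (i,i) = \<rho> (0, x) $$ (i,i) ^ N"
proof (induction N)
  case 0 then show ?case using rho_one assms by simp
next
  case (Suc N)
  have "\<rho> (0, of_nat N * x + x) $$ (i,i) = \<rho> (0, of_nat N * x) $$ (i,i) * \<rho> (0, x) $$ (i,i)"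
    by (rule diag_add[OF Zinv_natmult[OF assms(1)] assms])
  then show ?case using Suc by (simp add: algebra_simps)
qed

lemma diag_sq: assumes "x \<in> Zinv m" "i < n" shows "\<rho> (0, 2 * x) $$ (i,i) = 1"
proof -
  let ?d = "\<rho> (0, x) $$ (i,i)"
  have "?d ^ m = ?d" using diag_pow[OF assms, of m] diag_m[OF assms] by simp
  moreover have "?d ^ m = ?d * ?d ^ (m - 1)" using m0 by (metis power_eq_if not_gr0 less_numeral_extra(3))
  ultimately have "?d ^ (m - 1) = 1" using diag_nz[OF assms] by (metis mult_cancel_left1)
  then have "\<bar>?d\<bar> ^ (m - 1) = 1 ^ (m - 1)" by (metis power_abs abs_one power_one)
  then have "\<bar>?d\<bar> = 1" using m2 by (subst (asm) power_eq_iff_eq_base) auto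
  then have "?d ^ 2 = 1" by (metis power2_abs power_one)
  then show ?thesis using diag_pow[OF assms, of 2] by simp
qed


lemma W_mult: "a \<in> Zinv m \<Longrightarrow> b \<in> Zinv m \<Longrightarrow> W \<rho> a * W \<rho> b = W \<rho> (a + b)"
  unfolding W_def using rho_add0[OF Zinv_2 Zinv_2] by (simp add: algebra_simps)

lemma W_zero: "W \<rho> 0 = 1\<^sub>m n" unfolding W_def using rho_one by simp

lemma W_Ud1: assumes "c \<in> Zinv m" shows "Ud n 1 (W \<rho> c)"
  unfolding Ud_def W_def
proof (intro conjI allI impI)
  show "\<rho> (0, 2 * c) \<in> carrier_mat n n" by (rule rho_carrier[OF Zinv_2[OF assms]])
  fix i j assume ij: "i < n" "j < n" "j < i + 1"
  show "\<rho> (0, 2 * c) $$ (i, j) = (if i = j then 1 else 0)"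
  proof (cases "i = j")
    case True then show ?thesis using diag_sq[OF assms ij(1)] by simp
  next
    case False then show ?thesis using rho_ut[OF Zinv_2[OF assms], of 0] rho_carrier[OF Zinv_2[OF assms], of 0] ij
      unfolding upper_triangular_def by auto
  qed
qed

lemma W1_ne: "W \<rho> 1 \<noteq> 1\<^sub>m n"
proof
  assume "W \<rho> 1 = 1\<^sub>m n"
  then have "\<rho> (0, 2) = \<rho> (0, 0)" unfolding W_def using rho_one by simp
  then have "(0::int, 2::rat) = (0, 0)" using inj_onD[OF inj] by (metis BS_carrier Zinv_0 Zinv_int of_int_numeral)
  then show False by simp
qed


lemma exists_level: assumes n1: "n \<ge> 1"
  shows "\<exists>d i0 v. 1 \<le> d \<and> i0 + d < n \<and> v \<noteq> 0 \<and> v \<in> Zinv m \<and>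
     (\<forall>c\<in>Zinv m. Ud n d (W \<rho> c) \<and> W \<rho> c $$ (i0, i0 + d) = c * v)"
proof -
  define P where "P e \<longleftrightarrow> (\<forall>c\<in>Zinv m. Ud n e (W \<rho> c))" for e
  have P1: "P 1" unfolding P_def using W_Ud1 by blast
  have Pn: "\<not> P n"
  proof
    assume "P n"
    then have U: "Ud n n (W \<rho> 1)" unfolding P_def by simp
    have "W \<rho> 1 = 1\<^sub>m n"
      by (rule eq_matI) (use U in \<open>auto simp: Ud_def\<close>)
    then show False using W1_ne by simp
  qed
  obtain d where d: "1 \<le> d" "d < n" "P d" "\<not> P (Suc d)" using nat_step_exists[of P, OF P1 Pn n1] by blast
  obtain c where c: "c \<in> Zinv m" "\<not> Ud n (Suc d) (W \<rho> c)" using d(4) unfolding P_def by blast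
  have Ud: "Ud n d (W \<rho> c)" using d(3) c(1) unfolding P_def by blast
  obtain i j where ij: "i < n" "j < n" "j < i + Suc d" "W \<rho> c $$ (i,j) \<noteq> (if i = j then 1 else 0)"
    using c(2) Ud unfolding Ud_def by auto
  have "\<not> j < i + d" using ij Ud unfolding Ud_def by auto
  then have j: "j = i + d" using ij(3) by simp
  have i: "i + d < n" using ij j by simp
  define \<phi> where "\<phi> a = W \<rho> a $$ (i, i + d)" for a
  have add: "\<phi> (a + b) = \<phi> a + \<phi> b" if "a \<in> Zinv m" "b \<in> Zinv m" for a b
  proof -
    have "W \<rho> a * W \<rho> b = W \<rho> (a + b)" using W_mult that by simp
    moreover have "(W \<rho> a * W \<rho> b) $$ (i, i+d) = W \<rho> a $$ (i,i+d) + W \<rho> b $$ (i,i+d)"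
      using Ud_mult(2)[of n d "W \<rho> a" "W \<rho> b" i] d(1,3) that i unfolding P_def by blast
    ultimately show ?thesis unfolding \<phi>_def by simp
  qed
  have lin: "\<phi> a = a * \<phi> 1" if "a \<in> Zinv m" for a
    by (rule additive_Zinv[OF m0 add that])
  have "\<phi> c \<noteq> 0" using ij(4) j d(1) unfolding \<phi>_def by simp
  then have v: "\<phi> 1 \<noteq> 0" using lin[OF c(1)] by simp
  have vZ: "\<phi> 1 \<in> Zinv m" unfolding \<phi>_def W_def using rho_over[OF Zinv_2[OF Zinv_1], of 0] i
    by (intro mat_overD(2)) auto
  show ?thesis
    using d(1,3) i v vZ lin unfolding P_def \<phi>_def by blast
qed

end

lemma GLZ_mult[simp]: "x \<otimes>\<^bsub>GLZ_group m n\<^esub> y = x * y"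
  by (simp add: GLZ_group_def)

lemma GLZ_one[simp]: "\<one>\<^bsub>GLZ_group m n\<^esub> = 1\<^sub>m n"
  by (simp add: GLZ_group_def)

lemma G'_mult[simp]: "x \<otimes>\<^bsub>(GLZ_group m n)\<lparr>carrier := G\<rparr>\<^esub> y = x * y"
  by (simp add: GLZ_group_def)

lemma G'_one[simp]: "\<one>\<^bsub>(GLZ_group m n)\<lparr>carrier := G\<rparr>\<^esub> = 1\<^sub>m n"
  by (simp add: GLZ_group_def)

lemma G'_carrier[simp]: "carrier ((GLZ_group m n)\<lparr>carrier := G\<rparr>) = G"
  by simp

lemma pigeon:
  fixes m n :: nat and G K :: "rat mat set" and \<phi> :: "int \<Rightarrow> rat mat"
  defines "G' \<equiv> (GLZ_group m n)\<lparr>carrier := G\<rparr>"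
  assumes sub: "subgroup K G'" and fin: "finite (rcosets\<^bsub>G'\<^esub> K)"
    and phi_mult: "\<And>a b. \<phi> a * \<phi> b = \<phi> (a + b)" and phi0: "\<phi> 0 = 1\<^sub>m n"
    and phiG: "\<And>a. \<phi> a \<in> G" and GC: "G \<subseteq> carrier_mat n n"
  shows "\<phi> (int (fact (card (rcosets\<^bsub>G'\<^esub> K))) * z) \<in> K"
proof -
  let ?c = "card (rcosets\<^bsub>G'\<^esub> K)"
  have mc: "x * y \<in> K" if "x \<in> K" "y \<in> K" for x y
    using subgroup.m_closed[OF sub that] unfolding G'_def by simp
  have oc: "1\<^sub>m n \<in> K" using subgroup.one_closed[OF sub] unfolding G'_def by simp
  have gen: "\<psi> (int (fact ?c) * int q) \<in> K"
    if pm: "\<And>a b. \<psi> a * \<psi> b = \<psi> (a + b)" and p0: "\<psi> 0 = 1\<^sub>m n" and pG: "\<And>a. \<psi> a \<in> G" for \<psi> q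
  proof -
    define f where "f j = r_coset G' K (\<psi> (int j))" for j :: nat
    have fR: "f ` {0..?c} \<subseteq> rcosets\<^bsub>G'\<^esub> K"
      unfolding f_def RCOSETS_def using pG unfolding G'_def by auto
    have "\<not> inj_on f {0..?c}"
    proof
      assume "inj_on f {0..?c}"
      from card_inj_on_le[OF this fR fin] show False by simp
    qed
    then obtain i j where ij: "i \<in> {0..?c}" "j \<in> {0..?c}" "i \<noteq> j" "f i = f j"
      unfolding inj_on_def by blast
    have key: "\<psi> (int b - int a) \<in> K" if "f a = f b" for a b
    proof -
      have "\<psi> (int b) = 1\<^sub>m n * \<psi> (int b)" using p0 pm[of 0 "int b"] by simp
      then have "\<psi> (int b) \<in> f b" unfolding f_def r_coset_def G'_def
        using oc by auto
      then have "\<psi> (int b) \<in> f a" using that by simp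
      then obtain h where h: "h \<in> K" "\<psi> (int b) = h * \<psi> (int a)"
        unfolding f_def r_coset_def G'_def by auto
      have hc: "h \<in> carrier_mat n n" using subgroup.subset[OF sub] h(1) GC
        unfolding G'_def GLZ_group_def by auto
      have pc: "\<psi> x \<in> carrier_mat n n" for x using pG GC by auto
      have "h = h * (\<psi> (int a) * \<psi> (- int a))" using pm[of "int a" "- int a"] p0 hc by simp
      also have "\<dots> = (h * \<psi> (int a)) * \<psi> (- int a)" using assoc_mult_mat[OF hc pc pc] by simp
      also have "\<dots> = \<psi> (int b - int a)" using h(2) pm[of "int b" "- int a"] by simp
      finally show ?thesis using h(1) by simp
    qed
    obtain e where e: "1 \<le> e" "e \<le> ?c" "\<psi> (int e) \<in> K"
    proof (cases "i < j")
      case True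
      then show ?thesis using that[of "j - i"] key[OF ij(4)] ij by (auto simp: of_nat_diff)
    next
      case False
      then show ?thesis using that[of "i - j"] key[OF ij(4)[symmetric]] ij by (auto simp: of_nat_diff)
    qed
    have pw: "\<psi> (int e * int (Suc r)) \<in> K" for r
    proof (induction r)
      case (Suc r)
      have "\<psi> (int e * int (Suc r)) * \<psi> (int e) \<in> K" by (rule mc[OF Suc e(3)])
      then show ?case using pm by (simp add: algebra_simps)
    qed (use e in simp)
    obtain r where r: "fact ?c = e * r" using dvd_fact[OF e(1,2)] by blast
    show ?thesis
    proof (cases "r * q = 0")
      case True
      then have "int (fact ?c) * int q = 0" using r by simp
      then show ?thesis using p0 oc by simp
    next
      case False
      then obtain r' where "r * q = Suc r'" using not0_implies_Suc by blast
      then have "int (fact ?c) * int q = int e * int (Suc r')" using r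
        by (metis of_nat_mult mult.assoc)
      then show ?thesis using pw by simp
    qed
  qed
  show ?thesis
  proof (cases "z \<ge> 0")
    case True
    then show ?thesis using gen[OF phi_mult phi0 phiG, of "nat z"] by simp
  next
    case False
    have "(\<lambda>a. \<phi> (- a)) (int (fact ?c) * int (nat (- z))) \<in> K"
      by (rule gen) (auto simp: phi_mult phi0 phiG)
    then show ?thesis using False by simp
  qed
qed


lemma level_cong:
  fixes m n :: nat and \<rho> :: "int \<times> rat \<Rightarrow> rat mat"
  assumes m2: "m \<ge> 2" and hom: "\<rho> \<in> hom (BS m) (GLZ_group m n)"
    and TZ: "\<rho> ` carrier (BS m) \<subseteq> TZ m n"
    and inj: "inj_on \<rho> (carrier (BS m))"
    and d: "1 \<le> d" "i0 + d < n" and lev: "\<forall>c\<in>Zinv m. Ud n d (W \<rho> c) \<and> W \<rho> c $$ (i0, i0 + d) = c * v"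
    and v: "v = of_int z0 / of_nat m ^ j0" and z0: "z0 \<noteq> 0"
    and N: "N > 0" and dv: "nat \<bar>Y * z0\<bar> dvd N * m ^ e"
    and c: "c \<in> Zinv m" and cg: "Cg m n N (\<rho> (0, c))"
  shows "\<exists>r\<in>Zinv m. c = of_int Y * r"
proof -
  note ctx = m2 hom TZ inj
  have m0: "m > 0" using m2 by simp
  have "Cg m n N (\<rho> (0, c) * \<rho> (0, c))" by (rule Cg_mult[OF m0 cg cg rho_over[OF ctx c]])
  moreover have "\<rho> (0, c) * \<rho> (0, c) = W \<rho> c" unfolding W_def using rho_add0[OF ctx c c] by (metis mult_2)
  ultimately have "Cg m n N (W \<rho> c)" by simp
  then have all: "\<forall>i<n. \<forall>j<n. cong_zero m N (W \<rho> c $$ (i,j) - 1\<^sub>m n $$ (i,j))" unfolding Cg_def by blast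
  have i0: "i0 < n" using d by simp
  have "cong_zero m N (W \<rho> c $$ (i0, i0+d) - 1\<^sub>m n $$ (i0, i0+d))" using all i0 d(2) by blast
  moreover have "1\<^sub>m n $$ (i0, i0+d) = 0" using i0 d by simp
  moreover have "W \<rho> c $$ (i0,i0+d) = c * v" using lev c by blast
  ultimately have "cong_zero m N (c * v)" by (metis diff_zero)
  then obtain r1 where r1: "r1 \<in> Zinv m" "c * v = of_nat N * r1" unfolding cong_zero_def by blast
  obtain w where w: "N * m ^ e = nat \<bar>Y * z0\<bar> * w" using dv by blast
  define s :: int where "s = (if Y * z0 \<ge> 0 then 1 else -1)"
  have absX: "(of_nat (nat \<bar>Y * z0\<bar>) :: rat) = of_int (Y * z0) * of_int s"
    by (cases "Y * z0 \<ge> 0") (simp_all add: s_def)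
  define r3 where "r3 = of_int s * of_nat w * (r1 * of_nat m ^ j0) / of_nat m ^ e"
  have wZ: "(of_nat w :: rat) \<in> Zinv m" by (metis Zinv_int of_int_of_nat_eq)
  have r3: "r3 \<in> Zinv m" unfolding r3_def
    by (rule Zinv_div_pow[OF Zinv_mult[OF Zinv_mult[OF Zinv_int wZ] Zinv_mult[OF r1(1) Zinv_pow]]])
  have "c * of_int z0 = (c * v) * of_nat m ^ j0" using m0 by (simp add: v)
  then have "c * of_int z0 = of_nat N * (r1 * of_nat m ^ j0)" using r1(2) by simp
  also have "of_nat N = (of_nat (N * m ^ e) :: rat) / of_nat m ^ e" using m0 by simp
  also have "(of_nat (N * m ^ e) :: rat) = of_int (Y * z0) * of_int s * of_nat w"
    unfolding w of_nat_mult absX by simp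
  finally have "c * of_int z0 = (of_int Y * r3) * of_int z0" by (simp add: r3_def algebra_simps)
  then have "c = of_int Y * r3" using z0 by simp
  then show ?thesis using r3 by blast
qed


lemma BS_carrier_eq: "carrier (BS m) = {(k, b). b \<in> Zinv m}"
  by (simp add: BS_def)

lemma divisibility_from_powi:
  fixes m F :: nat assumes m2: "m \<ge> 2" and F1: "F \<ge> 1" and r4: "r4 \<in> Zinv m"
    and eq: "(of_nat m :: rat) powi k - 1 = of_int (int m ^ F - 1) * r4"
  shows "int F dvd k"
proof -
  have m0: "m > 0" using m2 by simp
  have NF: "of_int (int m ^ F - 1) = (of_nat (m ^ F - 1) :: rat)" "m ^ F - 1 > 0"
  proof -
    have "1 < m ^ F" using m2 F1 by (intro one_less_power) auto
    then show "of_int (int m ^ F - 1) = (of_nat (m ^ F - 1) :: rat)" "m ^ F - 1 > 0"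
      by (simp_all add: of_nat_diff)
  qed
  have cop: "coprime (m ^ F - 1) m" using coprime_pow_minus_one m2 F1 by simp
  have main: "F dvd K" if ex: "\<exists>r\<in>Zinv m. (of_int (int m ^ K - 1) :: rat) = of_nat (m ^ F - 1) * r" for K
  proof -
    obtain r where r: "r \<in> Zinv m" "(of_int (int m ^ K - 1) :: rat) = of_nat (m ^ F - 1) * r" using ex by blast
    have "int (m ^ F - 1) dvd int m ^ K - 1" by (rule Zinv_int_dvd[OF m0 NF(2) cop r])
    then have "int m ^ F - 1 dvd int m ^ K - 1" using m2 F1 by (simp add: of_nat_diff)
    then show ?thesis by (rule pow_minus_one_dvd[OF m2 F1])
  qed
  show ?thesis
  proof (cases "k \<ge> 0")
    case True
    have "(of_int (int m ^ nat k - 1) :: rat) = of_nat (m ^ F - 1) * r4"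
      using eq True NF(1) by (simp add: power_int_def)
    then have "F dvd nat k" using main r4 by blast
    then show ?thesis using True by (metis int_dvd_int_iff nat_0_le)
  next
    case False
    define K where "K = nat (-k)"
    have pk: "(of_nat m :: rat) powi k = 1 / of_nat m ^ K"
      using False by (simp add: K_def power_int_def power_inverse divide_inverse)
    have Mnz: "(of_nat m :: rat) ^ K \<noteq> 0" using m0 by simp
    have "(of_int (int m ^ K - 1) :: rat) = - ((of_nat m powi k - 1) * of_nat m ^ K)"
      using Mnz by (simp add: pk field_simps)
    also have "\<dots> = of_nat (m ^ F - 1) * (- (r4 * of_nat m ^ K))" using eq NF(1) by simp
    finally have "F dvd K" using main Zinv_uminus[OF Zinv_mult[OF r4 Zinv_pow]] by blast
    then show ?thesis using False unfolding K_def by (metis dvd_minus_iff int_dvd_int_iff nat_0_le neg_0_le_iff_le linorder_not_le less_imp_le)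
  qed
qed


theorem lemma4p9:
  fixes m n :: nat and \<rho> :: "int \<times> rat \<Rightarrow> rat mat"
  assumes "m \<ge> 2" and "n \<ge> 1"
    and "\<rho> \<in> hom (BS m) (GLZ_group m n)"
    and "\<rho> ` carrier (BS m) \<subseteq> TZ m n"
    and "inj_on \<rho> (carrier (BS m))"
    and "\<exists>i<n. \<rho> BS_a $$ (i,i) \<noteq> 1"
    and "\<forall>i<n. \<rho> BS_t $$ (i,i) > 0"
  shows "has_CSP m n (\<rho> ` carrier (BS m))"
proof -
  note ctx = assms(1,3,4,5)
  have m2: "m \<ge> 2" by (rule assms(1))
  have m0: "m > 0" using assms(1) by simp
  define G where "G = \<rho> ` carrier (BS m)"
  have GC: "G \<subseteq> carrier_mat n n" unfolding G_def BS_carrier_eq using rho_carrier[OF ctx] by auto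
  obtain d i0 v where lev: "1 \<le> d" "i0 + d < n" "v \<noteq> 0" "v \<in> Zinv m"
     "\<forall>c\<in>Zinv m. Ud n d (W \<rho> c) \<and> W \<rho> c $$ (i0, i0 + d) = c * v"
    using exists_level[OF ctx assms(2)] by blast
  obtain z0 j0 where v: "v = of_int z0 / of_nat m ^ j0" using lev(4) by (rule Zinv_E)
  have z0: "z0 \<noteq> 0" using lev(3) v by auto
  have Zm1: "(-1 :: rat) \<in> Zinv m" using Zinv_int[of "-1" m] by simp
  show ?thesis unfolding has_CSP_def G_def[symmetric]
  proof (intro allI impI)
    fix K assume KK: "subgroup K ((GLZ_group m n)\<lparr>carrier := G\<rparr>) \<and>
      finite (rcosets\<^bsub>(GLZ_group m n)\<lparr>carrier := G\<rparr>\<^esub> K)"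
    define F :: nat where "F = fact (card (rcosets\<^bsub>(GLZ_group m n)\<lparr>carrier := G\<rparr>\<^esub> K))"
    have F1: "F \<ge> 1" unfolding F_def by simp
    have mc: "x * y \<in> K" if "x \<in> K" "y \<in> K" for x y
      using subgroup.m_closed[OF conjunct1[OF KK] that] by simp
    have A1: "\<rho> (int F * z, 0) \<in> K" for z
      unfolding F_def
    proof (rule pigeon[OF conjunct1[OF KK] conjunct2[OF KK]])
      show "\<rho> (a, 0) * \<rho> (b, 0) = \<rho> (a + b, 0)" for a b
        using rho_mult[OF ctx Zinv_0 Zinv_0, of a b] by simp
      show "\<rho> (0, 0) = 1\<^sub>m n" by (rule rho_one[OF ctx])
      show "\<rho> (a, 0) \<in> G" for a unfolding G_def by (rule imageI) simp
      show "G \<subseteq> carrier_mat n n" by (rule GC)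
    qed
    have A2: "\<rho> (0, of_int (int F * z) / of_nat m ^ j) \<in> K" for z j
      unfolding F_def
    proof (rule pigeon[where \<phi> = "\<lambda>a. \<rho> (0, of_int a / of_nat m ^ j)", OF conjunct1[OF KK] conjunct2[OF KK]])
      show "\<rho> (0, of_int a / of_nat m ^ j) * \<rho> (0, of_int b / of_nat m ^ j) = \<rho> (0, of_int (a + b) / of_nat m ^ j)" for a b
        using rho_add0[OF ctx Zinv_div_pow[OF Zinv_int] Zinv_div_pow[OF Zinv_int], of a j b] by (simp add: add_divide_distrib)
      show "\<rho> (0, of_int 0 / of_nat m ^ j) = 1\<^sub>m n" using rho_one[OF ctx] by simp
      show "\<rho> (0, of_int a / of_nat m ^ j) \<in> G" for a unfolding G_def by (rule imageI) (simp add: Zinv_div_pow)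
      show "G \<subseteq> carrier_mat n n" by (rule GC)
    qed
    have B: "\<rho> (k, b) \<in> K" if h: "int F dvd k" "r \<in> Zinv m" "b = of_nat F * r" for k b r
    proof -
      obtain q where q: "k = int F * q" using h(1) by blast
      obtain z j where zj: "r = of_int z / of_nat m ^ j" using h(2) by (rule Zinv_E)
      have b: "b = of_int (int F * z) / of_nat m ^ j" using h(3) zj by simp
      have bZ: "b \<in> Zinv m" unfolding b by (rule Zinv_div_pow[OF Zinv_int])
      have "\<rho> (0 + k, (of_nat m) powi 0 * 0 + b) = \<rho> (0, b) * \<rho> (k, 0)"
        by (rule rho_mult[OF ctx bZ Zinv_0])
      then have "\<rho> (k, b) = \<rho> (0, b) * \<rho> (k, 0)" by simp
      then show ?thesis using mc[OF A2[of z j] A1[of q]] b q by simp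
    qed
    define Y where "Y = (int m ^ F - 1) * (int m - 1) * int F"
    have "1 < int m ^ F" using m2 F1 by (intro one_less_power) auto
    then have y1: "int m ^ F - 1 \<noteq> 0" by linarith
    have y2: "int m - 1 \<noteq> 0" "int F \<noteq> 0" using m2 F1 by auto
    have Yz: "Y * z0 \<noteq> 0" unfolding Y_def using z0 y1 y2 by simp
    then obtain N e where N: "N > 0" "coprime N m" "nat \<bar>Y * z0\<bar> dvd N * m ^ e"
      using decomp_coprime[OF m0, of "nat \<bar>Y * z0\<bar>"] by auto
    have LC: "\<exists>r\<in>Zinv m. c = of_int Y * r" if "c \<in> Zinv m" "Cg m n N (\<rho> (0, c))" for c
      using level_cong[OF ctx lev(1,2,5) v z0 N(1) N(3)] that by blast
    show "\<exists>N>0. coprime N m \<and> cong_subgroup m n G N \<subseteq> K"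
    proof (intro exI conjI subsetI)
      show "N > 0" "coprime N m" using N by auto
      fix A assume A: "A \<in> cong_subgroup m n G N"
      then obtain k b where kb: "b \<in> Zinv m" "A = \<rho> (k, b)"
        unfolding cong_subgroup_def G_def BS_carrier_eq by auto
      have CgA: "Cg m n N (\<rho> (k, b))" using A kb GC unfolding cong_subgroup_def Cg_def by auto
      have bi: "binv m k b \<in> Zinv m" by (rule binv_Zinv[OF ctx kb(1)])
      have Cgi: "Cg m n N (\<rho> (-k, binv m k b))"
        by (rule Cg_inv[OF m0 CgA rho_over[OF ctx bi] rho_inv(2)[OF ctx kb(1)]])
      have mpk: "(of_nat m :: rat) powi k * of_nat m powi (-k) = 1" using m0 by (simp add: power_int_minus)
      have bv: "binv m k b = - (of_nat m powi (-k) * b)" by (simp add: binv_def[OF ctx])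
      \<comment> \<open>commutator with a\<close>
      have e1: "\<rho> (-k, binv m k b) * \<rho> (0, -1) = \<rho> (-k, of_nat m powi (-k) * (-1) + binv m k b)"
        using rho_mult[OF ctx bi Zm1, of "-k" 0] by simp
      have X1: "of_nat m powi (-k) * (-1) + binv m k b \<in> Zinv m"
        by (intro Zinv_add[OF m0] Zinv_powi Zm1 bi)
      have e2: "\<rho> (0, 1) * \<rho> (-k, of_nat m powi (-k) * (-1) + binv m k b) = \<rho> (-k, of_nat m powi (-k) * (-1) + binv m k b + 1)"
        using rho_mult[OF ctx Zinv_1 X1, of 0 "-k"] by (simp add: add.commute)
      have X2: "of_nat m powi (-k) * (-1) + binv m k b + 1 \<in> Zinv m"
        by (intro Zinv_add[OF m0] X1 Zinv_1)
      have e3: "\<rho> (k, b) * \<rho> (-k, of_nat m powi (-k) * (-1) + binv m k b + 1) = \<rho> (0, of_nat m powi k * (of_nat m powi (-k) * (-1) + binv m k b + 1) + b)"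
        using rho_mult[OF ctx kb(1) X2, of k "-k"] by simp
      have ar: "(of_nat m :: rat) powi k * (of_nat m powi (-k) * (-1) + binv m k b + 1) + b = of_nat m powi k - 1"
        unfolding bv by (simp add: algebra_simps mpk flip: mult.assoc)
      have "Cg m n N (\<rho> (0, 1) * (\<rho> (-k, binv m k b) * \<rho> (0, -1)))"
        by (rule Cg_conj[OF m0 Cgi rho_over[OF ctx Zinv_1] rho_over[OF ctx Zm1]])
          (use rho_add0[OF ctx Zinv_1 Zm1] rho_one[OF ctx] in simp)
      then have "Cg m n N (\<rho> (-k, of_nat m powi (-k) * (-1) + binv m k b + 1))" using e1 e2 by simp
      then have "Cg m n N (\<rho> (k, b) * \<rho> (-k, of_nat m powi (-k) * (-1) + binv m k b + 1))"
        by (rule Cg_mult[OF m0 CgA _ rho_over[OF ctx X2]])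
      then have "Cg m n N (\<rho> (0, of_nat m powi k - 1))" using e3 ar by simp
      then obtain r1 where r1: "r1 \<in> Zinv m" "of_nat m powi k - 1 = of_int Y * r1"
        using LC Zinv_diff[OF m0 Zinv_powi[OF Zinv_1] Zinv_1, of k] by auto
      have kF: "int F dvd k"
      proof (rule divisibility_from_powi[OF m2 F1])
        show "(of_int (int m - 1) * of_nat F) * r1 \<in> Zinv m"
          by (intro Zinv_mult r1(1)) (metis Zinv_int of_int_of_nat_eq)+
        show "(of_nat m :: rat) powi k - 1 = of_int (int m ^ F - 1) * (of_int (int m - 1) * of_nat F * r1)"
          using r1(2) unfolding Y_def by (simp add: algebra_simps)
      qed
      \<comment> \<open>commutator with t\<close>
      have f1: "\<rho> (-k, binv m k b) * \<rho> (-1, 0) = \<rho> (-k - 1, binv m k b)"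
        using rho_mult[OF ctx bi Zinv_0, of "-k" "-1"] by simp
      have f2: "\<rho> (1, 0) * \<rho> (-k - 1, binv m k b) = \<rho> (-k, of_nat m * binv m k b)"
        using rho_mult[OF ctx Zinv_0 bi, of 1 "-k - 1"] by simp
      have X: "of_nat m * binv m k b \<in> Zinv m" by (rule Zinv_natmult[OF ctx bi])
      have f3: "\<rho> (k, b) * \<rho> (-k, of_nat m * binv m k b) = \<rho> (0, of_nat m powi k * (of_nat m * binv m k b) + b)"
        using rho_mult[OF ctx kb(1) X, of k "-k"] by simp
      have ar2: "(of_nat m :: rat) powi k * (of_nat m * binv m k b) + b = b - of_nat m * b"
        unfolding bv by (simp add: algebra_simps mpk flip: mult.assoc)
      have "Cg m n N (\<rho> (1, 0) * (\<rho> (-k, binv m k b) * \<rho> (-1, 0)))"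
        by (rule Cg_conj[OF m0 Cgi rho_over[OF ctx Zinv_0] rho_over[OF ctx Zinv_0]])
          (use rho_mult[OF ctx Zinv_0 Zinv_0, of 1 "-1"] rho_one[OF ctx] in simp)
      then have "Cg m n N (\<rho> (-k, of_nat m * binv m k b))" using f1 f2 by simp
      then have "Cg m n N (\<rho> (k, b) * \<rho> (-k, of_nat m * binv m k b))"
        by (rule Cg_mult[OF m0 CgA _ rho_over[OF ctx X]])
      then have "Cg m n N (\<rho> (0, b - of_nat m * b))" using f3 ar2 by simp
      then obtain r2 where r2: "r2 \<in> Zinv m" "b - of_nat m * b = of_int Y * r2"
        using LC Zinv_diff[OF m0 kb(1) Zinv_natmult[OF ctx kb(1)]] by auto
      define r'' where "r'' = - (of_int (int m ^ F - 1) * r2)"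
      have r''Z: "r'' \<in> Zinv m" unfolding r''_def by (intro Zinv_uminus Zinv_mult Zinv_int r2(1))
      have "b * (1 - of_nat m) = (of_nat F * r'') * (1 - of_nat m)"
        using r2(2) unfolding Y_def r''_def by (simp add: algebra_simps)
      moreover have "(1 - of_nat m :: rat) \<noteq> 0" using m2 by simp
      ultimately have "b = of_nat F * r''" by simp
      then show "A \<in> K" using B[OF kF r''Z] kb(2) by simp
    qed
  qed
qed

end
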